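(* Let $\alpha$ be a real algebraic integer whose minimal polynomial over $\mathbb{Q}$ has degree $d\ge1$. Then for every positive integer $t$, $|K_t|=(2t+1)^d$, $|G_t|=(2t+1)^{2d}$, and the nonzero elements of $G_{2t}$ determine at least $(2t)^{2d}$ distinct directions, i.e. the set $\{\arg(w)\bmod \pi : w\in G_{2t}\setminus\{0\}\}\subseteq[0,\pi)$ has at least $(2t)^{2d}$ elements.
   Context: For a real number $r\ge0$, $K_r:=\{\sum_{k=0}^{d-1}a_k\alpha^k : a_k\in\mathbb{Z},\ |a_k|\le r\}$ and $G_r:=K_r+iK_r=\{u_1+iu_2: u_1,u_2\in K_r\}\subset\mathbb{C}$. *)

theory Defs
  imports "HOL-Analysis.Analysis" "HOL-Computational_Algebra.Polynomial" "HOL-Library.Real_Mod"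
begin

definition Kset :: "real \<Rightarrow> nat \<Rightarrow> real \<Rightarrow> real set" where
  "Kset \<alpha> d r = {(\<Sum>k<d. of_int (a k) * \<alpha> ^ k) | a :: nat \<Rightarrow> int. \<forall>k<d. real_of_int \<bar>a k\<bar> \<le> r}"

definition Gset :: "real \<Rightarrow> nat \<Rightarrow> real \<Rightarrow> complex set" where
  "Gset \<alpha> d r = {complex_of_real u1 + \<i> * complex_of_real u2 | u1 u2. u1 \<in> Kset \<alpha> d r \<and> u2 \<in> Kset \<alpha> d r}"

definition direction :: "complex \<Rightarrow> real" where
  "direction w = Arg w rmod pi"

end

theory Submission
  imports Defs "HOL-Computational_Algebra.Polynomial_Factorial" "HOL-Computational_Algebra.Field_as_Ring"
begin


lemma chain_card:
  fixes A :: "'a set" and B :: "'b set" and ya :: "'a \<Rightarrow> real" and yb :: "'b \<Rightarrow> real"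
    and F :: "'a \<Rightarrow> 'b \<Rightarrow> real" and g :: "real \<Rightarrow> real"
  assumes fA: "finite A" and fB: "finite B" and nA: "A \<noteq> {}" and nB: "B \<noteq> {}"
    and iA: "inj_on ya A" and iB: "inj_on yb B"
    and pA: "\<forall>a\<in>A. ya a > 0" and pB: "\<forall>b\<in>B. yb b > 0"
    and ig: "inj_on g {0<..}"
    and F: "\<forall>a\<in>A. \<forall>b\<in>B. F a b = g (yb b / ya a)"
  shows "card A + card B \<le> card {F a b | a b. a \<in> A \<and> b \<in> B} + 1"
proof -
  have "Min (ya ` A) \<in> ya ` A" using fA nA by simp
  then obtain a0 where a0: "a0 \<in> A" "ya a0 = Min (ya ` A)" by auto
  have a0m: "\<forall>a\<in>A. ya a0 \<le> ya a" using a0 fA by simp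
  have "Min (yb ` B) \<in> yb ` B" using fB nB by simp
  then obtain b0 where b0: "b0 \<in> B" "yb b0 = Min (yb ` B)" by auto
  have b0m: "\<forall>b\<in>B. yb b0 \<le> yb b" using b0 fB by simp
  define S1 where "S1 = (\<lambda>a. F a b0) ` A"
  define S2 where "S2 = (\<lambda>b. F a0 b) ` B"
  have "inj_on (\<lambda>a. F a b0) A"
  proof (rule inj_onI)
    fix a a' assume h: "a \<in> A" "a' \<in> A" "F a b0 = F a' b0"
    have p: "ya a > 0" "ya a' > 0" "yb b0 > 0" using h pA pB b0 by auto
    have "g (yb b0 / ya a) = g (yb b0 / ya a')" using h F b0 by auto
    hence "yb b0 / ya a = yb b0 / ya a'" using ig p by (auto dest: inj_onD)
    hence "ya a = ya a'" using p by (simp add: field_simps)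
    thus "a = a'" using iA h by (auto dest: inj_onD)
  qed
  hence c1: "card S1 = card A" unfolding S1_def by (simp add: card_image)
  have "inj_on (\<lambda>b. F a0 b) B"
  proof (rule inj_onI)
    fix b b' assume h: "b \<in> B" "b' \<in> B" "F a0 b = F a0 b'"
    have p: "yb b > 0" "yb b' > 0" "ya a0 > 0" using h pA pB a0 by auto
    have "g (yb b / ya a0) = g (yb b' / ya a0)" using h F a0 by auto
    hence "yb b / ya a0 = yb b' / ya a0" using ig p by (auto dest: inj_onD)
    hence "yb b = yb b'" using p by (simp add: field_simps)
    thus "b = b'" using iB h by (auto dest: inj_onD)
  qed
  hence c2: "card S2 = card B" unfolding S2_def by (simp add: card_image)
  have int: "S1 \<inter> S2 \<subseteq> {F a0 b0}"
  proof
    fix x assume "x \<in> S1 \<inter> S2"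
    then obtain a b where ab: "a \<in> A" "b \<in> B" "x = F a b0" "x = F a0 b"
      unfolding S1_def S2_def by auto
    have p: "ya a > 0" "yb b > 0" "ya a0 > 0" "yb b0 > 0" using ab pA pB a0 b0 by auto
    have "g (yb b0 / ya a) = g (yb b / ya a0)" using ab F a0 b0 by auto
    hence e: "yb b0 / ya a = yb b / ya a0" using ig p by (auto dest: inj_onD)
    have l1: "yb b0 / ya a \<le> yb b0 / ya a0" using a0m ab p
      by (simp add: divide_left_mono)
    have l2: "yb b0 / ya a0 \<le> yb b / ya a0" using b0m ab p
      by (simp add: divide_right_mono)
    have "yb b0 / ya a = yb b0 / ya a0" using e l1 l2 by linarith
    hence "ya a = ya a0" using p by (simp add: field_simps)
    hence "a = a0" using iA ab(1) a0(1) by (metis inj_onD)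
    thus "x \<in> {F a0 b0}" using ab by simp
  qed
  have fS: "finite S1" "finite S2" unfolding S1_def S2_def using fA fB by auto
  have ci: "card (S1 \<inter> S2) \<le> 1" using card_mono[OF _ int] by simp
  have cu: "card S1 + card S2 = card (S1 \<union> S2) + card (S1 \<inter> S2)"
    using card_Un_Int[OF fS] .
  have sub: "S1 \<union> S2 \<subseteq> {F a b | a b. a \<in> A \<and> b \<in> B}"
    unfolding S1_def S2_def using a0 b0 by auto
  have fin: "finite {F a b | a b. a \<in> A \<and> b \<in> B}"
  proof -
    have "{F a b | a b. a \<in> A \<and> b \<in> B} = (\<lambda>(a,b). F a b) ` (A \<times> B)" by auto
    thus ?thesis using fA fB by simp
  qed
  have "card (S1 \<union> S2) \<le> card {F a b | a b. a \<in> A \<and> b \<in> B}"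
    using card_mono[OF fin sub] .
  thus ?thesis using c1 c2 ci cu by linarith
qed



lemma dir_part:
  fixes Q :: "complex set"
  assumes fQ: "finite Q" and Q1: "1 \<in> Q"
  shows "card ((\<lambda>w. Re w / Im w) ` {w\<in>Q. Im w > 0}) + 1 \<le> card (direction ` (Q - {0}))"
proof -
  define W where "W = {w\<in>Q. Im w > 0}"
  have dW: "direction w = Arg w" if "w \<in> W" for w
  proof -
    have "0 < Arg w \<and> Arg w < pi" using that Arg_lt_pi[of w] unfolding W_def by auto
    hence "Arg w rmod pi = Arg w" by (intro rmod_unique[where n=0]) auto
    thus ?thesis unfolding direction_def by simp
  qed
  have dpos: "direction w > 0" if "w \<in> W" for w
    using dW[OF that] that Arg_lt_pi[of w] unfolding W_def by auto
  have ctW: "Re w / Im w = cos (direction w) / sin (direction w)" if "w \<in> W" for w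
  proof -
    have w0: "w \<noteq> 0" using that unfolding W_def by auto
    have c: "cis (Arg w) = sgn w" using cis_Arg[OF w0] .
    have "cos (Arg w) = Re w / cmod w" using arg_cong[OF c, of Re] by (simp add: sgn_div_norm divide_inverse mult.commute)
    moreover have "sin (Arg w) = Im w / cmod w" using arg_cong[OF c, of Im] by (simp add: sgn_div_norm divide_inverse mult.commute)
    ultimately have "Re w / Im w = (cmod w * cos (Arg w)) / (cmod w * sin (Arg w))"
      using w0 by (simp add: field_simps)
    also have "\<dots> = cos (Arg w) / sin (Arg w)" using w0 by simp
    finally show ?thesis using dW[OF that] by simp
  qed
  have "(\<lambda>w. Re w / Im w) ` W = (\<lambda>t. cos t / sin t) ` (direction ` W)"
    unfolding image_image using ctW by (intro image_cong) auto
  hence c1: "card ((\<lambda>w. Re w / Im w) ` W) \<le> card (direction ` W)"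
    by (metis card_image_le finite_imageI fQ W_def finite_subset mem_Collect_eq subsetI)
  have fW: "finite (direction ` W)" unfolding W_def using fQ by auto
  have n0: "0 \<notin> direction ` W" using dpos by fastforce
  have sub: "insert 0 (direction ` W) \<subseteq> direction ` (Q - {0})"
  proof -
    have "direction 1 = 0" unfolding direction_def by simp
    hence "0 \<in> direction ` (Q - {0})" using Q1 by (metis DiffI empty_iff image_eqI insert_iff one_neq_zero)
    moreover have "W \<subseteq> Q - {0}" unfolding W_def by auto
    ultimately show ?thesis by auto
  qed
  have "card (insert 0 (direction ` W)) = card (direction ` W) + 1" using fW n0 by simp
  moreover have "card (insert 0 (direction ` W)) \<le> card (direction ` (Q - {0}))"
    using card_mono[OF _ sub] fQ by auto
  ultimately show ?thesis using c1 unfolding W_def by linarith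
qed



lemma div_div_cancel:
  fixes X y z :: real assumes "y \<noteq> 0" shows "(X/y)/(z/y) = X/z"
  using assms by (simp add: divide_divide_eq_right)

lemma sym_count:
  fixes P Q :: "complex set"
  assumes fP: "finite P" and fQ: "finite Q" and sym: "\<forall>z\<in>P. -z \<in> P" and P0: "0 \<in> P" and P1: "1 \<in> P"
    and Pi: "\<i> \<in> P" and PQ: "\<forall>u\<in>P. \<forall>v\<in>P. u + v \<in> Q"
  shows "2 * (card {z\<in>P. Im z > 0} + card {z\<in>P. Im z = 0 \<and> Re z > 0})
          \<le> card ((\<lambda>w. Re w / Im w) ` {w\<in>Q. Im w > 0}) + 1"
proof -
  define ct where "ct = (\<lambda>z::complex. Re z / Im z)"
  define U where "U = {z\<in>P. Im z > 0}"
  define R where "R = {z\<in>P. Im z = 0 \<and> Re z > 0}"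
  define C where "C = ct ` U"
  define ray where "ray c = {z\<in>U. ct z = c}" for c
  define W where "W = {w\<in>Q. Im w > 0}"
  have fU: "finite U" and fR: "finite R" using fP unfolding U_def R_def by auto
  have fC: "finite C" unfolding C_def using fU by auto
  have iU: "\<i> \<in> U" using Pi unfolding U_def by simp
  have CN: "C \<noteq> {}" unfolding C_def using iU by auto
  have oR: "1 \<in> R" using P1 unfolding R_def by simp
  have RN: "R \<noteq> {}" using oR by auto
  have fray: "finite (ray c)" for c using fU unfolding ray_def by auto
  have rayN: "ray c \<noteq> {}" if "c \<in> C" for c using that unfolding C_def ray_def by auto
  have rayP: "Re z = c * Im z \<and> Im z > 0 \<and> z \<in> P" if "z \<in> ray c" for z c
    using that unfolding ray_def U_def ct_def by auto
  have rayI: "inj_on Im (ray c)" for c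
  proof (rule inj_onI)
    fix x y assume "x \<in> ray c" "y \<in> ray c" "Im x = Im y"
    thus "x = y" using rayP[of x c] rayP[of y c] by (intro complex_eqI) auto
  qed
  have RP: "Im h = 0 \<and> Re h > 0 \<and> h \<in> P" if "h \<in> R" for h using that unfolding R_def by auto
  have RI: "inj_on Re R"
  proof (rule inj_onI)
    fix x y assume "x \<in> R" "y \<in> R" "Re x = Re y"
    thus "x = y" using RP[of x] RP[of y] by (intro complex_eqI) auto
  qed
  have ctW: "ct z \<in> ct ` W" if "z \<in> Q" "Im z > 0" for z using that unfolding W_def by auto
  define hasnx where "hasnx c \<longleftrightarrow> (\<exists>c'\<in>C. c' > c)" for c
  define nx where "nx c = Min {c'\<in>C. c' > c}" for c
  have nxP: "nx c \<in> C \<and> c < nx c \<and> (\<forall>c'\<in>C. c' > c \<longrightarrow> nx c \<le> c')" if "hasnx c" for c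
  proof -
    have f: "finite {c'\<in>C. c' > c}" using fC by auto
    have n: "{c'\<in>C. c' > c} \<noteq> {}" using that unfolding hasnx_def by auto
    show ?thesis using Min_in[OF f n] Min_le[OF f] unfolding nx_def by auto
  qed
  define m0 where "m0 = Min C"
  have m0C: "m0 \<in> C" unfolding m0_def using fC CN by simp
  have m0le: "m0 \<le> c" if "c \<in> C" for c unfolding m0_def using fC that by simp
  define V where "V c = (if hasnx c then {ct (u+v) | u v. u \<in> ray c \<and> v \<in> ray (nx c)}
                         else {ct (u+h) | u h. u \<in> ray c \<and> h \<in> R})" for c
  define kap where "kap c = (if hasnx c then card (ray (nx c)) else card R)" for c
  define Vb where "Vb = {ct (v - h) | v h. v \<in> ray m0 \<and> h \<in> R}"
  have Vcard: "card (ray c) + kap c \<le> card (V c) + 1" if cC: "c \<in> C" for c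
  proof (cases "hasnx c")
    case True
    define c' where "c' = nx c"
    have cc: "c' \<in> C" "c < c'" using nxP[OF True] unfolding c'_def by auto
    have "card (ray c) + card (ray c') \<le> card {ct (u+v) | u v. u \<in> ray c \<and> v \<in> ray c'} + 1"
    proof (rule chain_card[where ya=Im and yb=Im and g="\<lambda>r. (c + c' * r) / (1 + r)"])
      show "inj_on (\<lambda>r. (c + c' * r) / (1 + r)) {0<..}"
      proof (rule inj_onI)
        fix r s :: real assume h: "r \<in> {0<..}" "s \<in> {0<..}" "(c + c' * r) / (1 + r) = (c + c' * s) / (1 + s)"
        have nz: "1 + r \<noteq> 0" "1 + s \<noteq> 0" using h(1,2) by auto
        have "(c + c' * r) * (1 + s) = (c + c' * s) * (1 + r)" using h(3) unfolding frac_eq_eq[OF nz] .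
        moreover have "(c' - c) * (r - s) = (c + c' * r) * (1 + s) - (c + c' * s) * (1 + r)"
          by (simp add: algebra_simps)
        ultimately have "(c' - c) * (r - s) = 0" by simp
        thus "r = s" using cc by simp
      qed
      show "\<forall>a\<in>ray c. \<forall>b\<in>ray c'. ct (a + b) = (c + c' * (Im b / Im a)) / (1 + Im b / Im a)"
      proof (intro ballI)
        fix a b assume "a \<in> ray c" "b \<in> ray c'"
        hence h: "Re a = c * Im a" "Im a > 0" "Re b = c' * Im b" "Im b > 0" using rayP by auto
        have e1: "ct (a+b) = (c * Im a + c' * Im b) / (Im a + Im b)" unfolding ct_def using h by simp
        have n1: "c + c' * (Im b / Im a) = (c * Im a + c' * Im b) / Im a" using h(2) by (simp add: add_divide_distrib)
        have n2: "1 + Im b / Im a = (Im a + Im b) / Im a" using h(2) by (simp add: add_divide_distrib)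
        show "ct (a + b) = (c + c' * (Im b / Im a)) / (1 + Im b / Im a)"
        proof -
          have fin: "((c*Im a + c'*Im b)/Im a) / ((Im a + Im b)/Im a) = (c*Im a + c'*Im b) / (Im a + Im b)"
            by (rule div_div_cancel) (use h(2) in simp)
          show ?thesis unfolding e1 n1 n2 by (rule fin[symmetric])
        qed
      qed
    qed (use fray rayN cC cc rayI rayP in auto)
    thus ?thesis unfolding V_def kap_def c'_def using True by simp
  next
    case False
    have "card (ray c) + card R \<le> card {ct (u+h) | u h. u \<in> ray c \<and> h \<in> R} + 1"
    proof (rule chain_card[where ya=Im and yb=Re and g="\<lambda>r. c + r"])
      show "\<forall>a\<in>ray c. \<forall>b\<in>R. ct (a + b) = c + Re b / Im a"
      proof (intro ballI)
        fix a b assume "a \<in> ray c" "b \<in> R"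
        hence h: "Re a = c * Im a" "Im a > 0" "Im b = 0" using rayP RP by auto
        show "ct (a + b) = c + Re b / Im a" unfolding ct_def using h by (simp add: add_divide_distrib)
      qed
    qed (use fray rayN cC fR RN rayI RI rayP RP in auto)
    thus ?thesis unfolding V_def kap_def using False by simp
  qed
  have Vbcard: "card (ray m0) + card R \<le> card Vb + 1"
    unfolding Vb_def
  proof (rule chain_card[where ya=Im and yb=Re and g="\<lambda>r. m0 - r"])
    show "\<forall>a\<in>ray m0. \<forall>b\<in>R. ct (a - b) = m0 - Re b / Im a"
    proof (intro ballI)
      fix a b assume "a \<in> ray m0" "b \<in> R"
      hence h: "Re a = m0 * Im a" "Im a > 0" "Im b = 0" using rayP RP by auto
      show "ct (a - b) = m0 - Re b / Im a" unfolding ct_def using h by (simp add: diff_divide_distrib)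
    qed
  qed (use fray rayN m0C fR RN rayI RI rayP RP in \<open>auto simp: inj_on_def\<close>)
  have Vbnd: "c < x \<and> (hasnx c \<longrightarrow> x < nx c)" if "c \<in> C" "x \<in> V c" for c x
  proof (cases "hasnx c")
    case True
    define c' where "c' = nx c"
    have cc: "c < c'" using nxP[OF True] unfolding c'_def by auto
    have "x \<in> {ct (u+v) | u v. u \<in> ray c \<and> v \<in> ray (nx c)}" using that(2) True by (simp add: V_def)
    then obtain u v where uv: "u \<in> ray c" "v \<in> ray c'" "x = ct (u + v)"
      unfolding c'_def by blast
    have h: "Re u = c * Im u" "Im u > 0" "Re v = c' * Im v" "Im v > 0" using uv rayP by auto
    have x: "x = (c * Im u + c' * Im v) / (Im u + Im v)" using uv h unfolding ct_def by simp
    have "c * (Im u + Im v) < c * Im u + c' * Im v" using h cc by (simp add: algebra_simps)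
    moreover have "c * Im u + c' * Im v < c' * (Im u + Im v)" using h cc by (simp add: algebra_simps)
    ultimately have "c < x \<and> x < c'" unfolding x using h
      by (simp add: pos_less_divide_eq pos_divide_less_eq)
    thus ?thesis unfolding c'_def by simp
  next
    case False
    have "x \<in> {ct (u+h) | u h. u \<in> ray c \<and> h \<in> R}" using that(2) False by (simp add: V_def)
    then obtain u h where uh: "u \<in> ray c" "h \<in> R" "x = ct (u + h)" by blast
    have hh: "Re u = c * Im u" "Im u > 0" "Im h = 0" "Re h > 0" using uh rayP RP by auto
    have "x = c + Re h / Im u" using uh hh unfolding ct_def by (simp add: add_divide_distrib)
    thus ?thesis using False hh by simp
  qed
  have Vbbnd: "x < m0" if "x \<in> Vb" for x
  proof -
    from that obtain u h where uh: "u \<in> ray m0" "h \<in> R" "x = ct (u - h)"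
      unfolding Vb_def by blast
    have hh: "Re u = m0 * Im u" "Im u > 0" "Im h = 0" "Re h > 0" using uh rayP RP by auto
    have "x = m0 - Re h / Im u" using uh hh unfolding ct_def by (simp add: diff_divide_distrib)
    thus ?thesis using hh by simp
  qed
  have CW: "C \<subseteq> ct ` W"
  proof
    fix c assume "c \<in> C"
    then obtain u where u: "u \<in> U" "c = ct u" unfolding C_def by auto
    have "u + 0 \<in> Q" using PQ u P0 unfolding U_def by auto
    thus "c \<in> ct ` W" using ctW[of u] u unfolding U_def by auto
  qed
  have VW: "V c \<subseteq> ct ` W" if "c \<in> C" for c
  proof
    fix x assume x: "x \<in> V c"
    show "x \<in> ct ` W"
    proof (cases "hasnx c")
      case True
      have "x \<in> {ct (u+v) | u v. u \<in> ray c \<and> v \<in> ray (nx c)}" using x True by (simp add: V_def)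
      then obtain u v where uv: "u \<in> ray c" "v \<in> ray (nx c)" "x = ct (u + v)" by blast
      show ?thesis using rayP[OF uv(1)] rayP[OF uv(2)] PQ by (intro ctW[of "u+v", folded uv(3)]) auto
    next
      case False
      have "x \<in> {ct (u+h) | u h. u \<in> ray c \<and> h \<in> R}" using x False by (simp add: V_def)
      then obtain u h where uv: "u \<in> ray c" "h \<in> R" "x = ct (u + h)" by blast
      show ?thesis using rayP[OF uv(1)] RP[OF uv(2)] PQ by (intro ctW[of "u+h", folded uv(3)]) auto
    qed
  qed
  have VbW: "Vb \<subseteq> ct ` W"
  proof
    fix x assume x: "x \<in> Vb"
    then obtain u h where uv: "u \<in> ray m0" "h \<in> R" "x = ct (u - h)"
      unfolding Vb_def by auto
    have "-h \<in> P" using sym RP[OF uv(2)] by blast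
    hence "u + (-h) \<in> Q" using PQ rayP[OF uv(1)] by blast
    hence "u - h \<in> Q" by simp
    thus "x \<in> ct ` W" using rayP[OF uv(1)] RP[OF uv(2)] by (intro ctW[of "u-h", folded uv(3)]) auto
  qed
  have fW: "finite (ct ` W)" unfolding W_def using fQ by auto
  have fV: "finite (V c)" if "c \<in> C" for c using finite_subset[OF VW[OF that] fW] .
  have fVb: "finite Vb" using finite_subset[OF VbW fW] .
  have Vdisj_lt: "V c \<inter> V c' = {}" if "c \<in> C" "c' \<in> C" "c < c'" for c c'
  proof -
    have hn: "hasnx c" using that unfolding hasnx_def by auto
    have "nx c \<le> c'" using nxP[OF hn] that by auto
    thus ?thesis using Vbnd[of c] Vbnd[of c'] that hn by fastforce
  qed
  have Vdisj: "\<forall>c\<in>C. \<forall>c'\<in>C. c \<noteq> c' \<longrightarrow> V c \<inter> V c' = {}"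
    using Vdisj_lt by (metis Int_commute linorder_neqE)
  have cUV: "card (\<Union>c\<in>C. V c) = (\<Sum>c\<in>C. card (V c))"
    by (rule card_UN_disjoint) (use fC fV Vdisj in auto)
  have CVb: "C \<inter> Vb = {}" using Vbbnd m0le by force
  have CV: "C \<inter> (\<Union>c\<in>C. V c) = {}"
  proof (rule ccontr)
    assume "C \<inter> (\<Union>c\<in>C. V c) \<noteq> {}"
    then obtain e c where ec: "e \<in> C" "c \<in> C" "e \<in> V c" by auto
    have "c < e" using Vbnd[OF ec(2,3)] by simp
    hence hn: "hasnx c" using ec unfolding hasnx_def by auto
    have "nx c \<le> e" using nxP[OF hn] ec \<open>c < e\<close> by auto
    thus False using Vbnd[OF ec(2,3)] hn by simp
  qed
  have VbV: "Vb \<inter> (\<Union>c\<in>C. V c) = {}"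
  proof (rule ccontr)
    assume "Vb \<inter> (\<Union>c\<in>C. V c) \<noteq> {}"
    then obtain e c where ec: "e \<in> Vb" "c \<in> C" "e \<in> V c" by auto
    show False using Vbnd[OF ec(2,3)] Vbbnd[OF ec(1)] m0le[OF ec(2)] by simp
  qed
  define T where "T = C \<union> Vb \<union> (\<Union>c\<in>C. V c)"
  have fUV: "finite (\<Union>c\<in>C. V c)" using fC fV by auto
  have cT: "card T = card C + card Vb + (\<Sum>c\<in>C. card (V c))"
  proof -
    have "card (C \<union> Vb) = card C + card Vb" using card_Un_disjoint[OF fC fVb CVb] .
    moreover have "(C \<union> Vb) \<inter> (\<Union>c\<in>C. V c) = {}" using CV VbV by auto
    ultimately show ?thesis unfolding T_def using card_Un_disjoint[OF _ fUV, of "C \<union> Vb"] fC fVb cUV by simp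
  qed
  have TW: "card T \<le> card (ct ` W)"
    by (rule card_mono[OF fW]) (use CW VW VbW in \<open>auto simp: T_def\<close>)
  have s1: "(\<Sum>c\<in>C. card (ray c) + kap c) \<le> (\<Sum>c\<in>C. card (V c) + 1)"
    by (rule sum_mono) (use Vcard in auto)
  have e1: "(\<Sum>c\<in>C. card (V c) + 1) = (\<Sum>c\<in>C. card (V c)) + card C"
    by (subst sum.distrib) simp
  have e2: "(\<Sum>c\<in>C. card (ray c) + kap c) = (\<Sum>c\<in>C. card (ray c)) + (\<Sum>c\<in>C. kap c)"
    by (rule sum.distrib)
  have s2: "(\<Sum>c\<in>C. card (ray c)) + (\<Sum>c\<in>C. kap c) \<le> (\<Sum>c\<in>C. card (V c)) + card C"
    using s1 e1 e2 by linarith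
  have cardU: "card U = (\<Sum>c\<in>C. card (ray c))"
  proof -
    have "U = (\<Union>c\<in>C. ray c)" unfolding C_def ray_def by auto
    moreover have "card (\<Union>c\<in>C. ray c) = (\<Sum>c\<in>C. card (ray c))"
      by (rule card_UN_disjoint) (use fC fray in \<open>auto simp: ray_def\<close>)
    ultimately show ?thesis by simp
  qed
  define M where "M = Max C"
  have MC: "M \<in> C" unfolding M_def using fC CN by simp
  have Mge: "c \<le> M" if "c \<in> C" for c unfolding M_def using fC that by simp
  have nM: "\<not> hasnx M" unfolding hasnx_def using Mge by force
  have hnc: "hasnx c" if "c \<in> C - {M}" for c using that Mge MC unfolding hasnx_def
    by (metis DiffE insertI1 order_le_imp_less_or_eq)
  have nxlt: "nx c1 < nx c2" if "c1 \<in> C - {M}" "c2 \<in> C - {M}" "c1 < c2" for c1 c2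
  proof -
    have "nx c1 \<le> c2" using nxP[OF hnc[OF that(1)]] that by auto
    thus ?thesis using nxP[OF hnc[OF that(2)]] by simp
  qed
  have inx: "inj_on nx (C - {M})"
  proof (rule inj_onI)
    fix c1 c2 assume h: "c1 \<in> C - {M}" "c2 \<in> C - {M}" "nx c1 = nx c2"
    show "c1 = c2"
    proof (rule ccontr)
      assume "c1 \<noteq> c2"
      hence "c1 < c2 \<or> c2 < c1" by auto
      thus False using nxlt[OF h(1,2)] nxlt[OF h(2,1)] h(3) by auto
    qed
  qed
  have imsub: "nx ` (C - {M}) \<subseteq> C - {m0}"
  proof
    fix x assume "x \<in> nx ` (C - {M})"
    then obtain c where c: "c \<in> C - {M}" "x = nx c" by auto
    have "nx c \<in> C" "c < nx c" using nxP[OF hnc[OF c(1)]] by auto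
    thus "x \<in> C - {m0}" using m0le[of c] c by auto
  qed
  have imeq: "nx ` (C - {M}) = C - {m0}"
  proof (rule card_subset_eq[OF _ imsub])
    show "finite (C - {m0})" using fC by simp
    show "card (nx ` (C - {M})) = card (C - {m0})"
      using card_image[OF inx] MC m0C fC by simp
  qed
  have kapsum: "(\<Sum>c\<in>C. kap c) + card (ray m0) = (\<Sum>c\<in>C. card (ray c)) + card R"
  proof -
    have "(\<Sum>c\<in>C. kap c) = kap M + (\<Sum>c\<in>C - {M}. kap c)" using sum.remove[OF fC MC] .
    also have "kap M = card R" unfolding kap_def using nM by simp
    also have "(\<Sum>c\<in>C - {M}. kap c) = (\<Sum>c\<in>C - {M}. card (ray (nx c)))"
      by (rule sum.cong) (use hnc in \<open>auto simp: kap_def\<close>)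
    also have "\<dots> = (\<Sum>c\<in>nx ` (C - {M}). card (ray c))"
      using sum.reindex[OF inx, of "\<lambda>c. card (ray c)"] by simp
    also have "\<dots> = (\<Sum>c\<in>C - {m0}. card (ray c))" using imeq by simp
    finally have "(\<Sum>c\<in>C. kap c) = card R + (\<Sum>c\<in>C - {m0}. card (ray c))" .
    moreover have "(\<Sum>c\<in>C. card (ray c)) = card (ray m0) + (\<Sum>c\<in>C - {m0}. card (ray c))"
      using sum.remove[OF fC m0C] .
    ultimately show ?thesis by simp
  qed
  have "2 * (card U + card R) \<le> card (ct ` W) + 1"
  proof -
    have "(\<Sum>c\<in>C. card (ray c)) + (\<Sum>c\<in>C. kap c) + card (ray m0) + card R \<le> card T + 1"
      using s2 Vbcard cT by linarith
    hence "2 * ((\<Sum>c\<in>C. card (ray c)) + card R) \<le> card T + 1" using kapsum by simp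
    moreover have "card T + 1 \<le> card (ct ` W) + 1" using TW by simp
    ultimately show ?thesis unfolding cardU by (rule order_trans)
  qed
  thus ?thesis unfolding ct_def W_def U_def R_def .
qed



lemma sym_card:
  fixes P :: "complex set"
  assumes fP: "finite P" and sym: "\<forall>z\<in>P. -z \<in> P" and P0: "0 \<in> P"
  shows "card P = 2 * (card {z\<in>P. Im z > 0} + card {z\<in>P. Im z = 0 \<and> Re z > 0}) + 1"
proof -
  define U where "U = {z\<in>P. Im z > 0}"
  define R where "R = {z\<in>P. Im z = 0 \<and> Re z > 0}"
  define H where "H = U \<union> R"
  have fU: "finite U" and fR: "finite R" using fP unfolding U_def R_def by auto
  have cH: "card H = card U + card R" unfolding H_def
    by (rule card_Un_disjoint) (use fU fR in \<open>auto simp: U_def R_def\<close>)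
  have fH: "finite H" unfolding H_def using fU fR by auto
  have Pe: "P = insert 0 (H \<union> uminus ` H)"
  proof (rule set_eqI)
    fix z show "z \<in> P \<longleftrightarrow> z \<in> insert 0 (H \<union> uminus ` H)"
    proof
      assume z: "z \<in> P"
      show "z \<in> insert 0 (H \<union> uminus ` H)"
      proof (cases "z = 0")
        case False
        have "-z \<in> P" using sym z by auto
        moreover have "Im z > 0 \<or> Im z < 0 \<or> (Im z = 0 \<and> (Re z > 0 \<or> Re z < 0))"
          using False complex_eqI[of z 0] by force
        ultimately have "z \<in> H \<or> -z \<in> H" using z unfolding H_def U_def R_def by auto
        thus ?thesis by (metis UnI1 UnI2 image_eqI insertI2 minus_minus)
      qed simp
    next
      assume "z \<in> insert 0 (H \<union> uminus ` H)"
      thus "z \<in> P" using P0 sym unfolding H_def U_def R_def by auto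
    qed
  qed
  have d1: "0 \<notin> H \<union> uminus ` H" unfolding H_def U_def R_def by auto
  have d2: "H \<inter> uminus ` H = {}" unfolding H_def U_def R_def by auto
  have "card (uminus ` H) = card H" by (rule card_image) (simp add: inj_on_def)
  hence "card (H \<union> uminus ` H) = 2 * card H" using card_Un_disjoint[OF fH _ d2] fH by simp
  hence "card P = 2 * card H + 1" unfolding Pe using d1 fH by simp
  thus ?thesis using cH unfolding U_def R_def by simp
qed

lemma dir_bound:
  fixes P Q :: "complex set"
  assumes fP: "finite P" and fQ: "finite Q" and sym: "\<forall>z\<in>P. -z \<in> P" and P0: "0 \<in> P" and P1: "1 \<in> P"
    and Pi: "\<i> \<in> P" and PQ: "\<forall>u\<in>P. \<forall>v\<in>P. u + v \<in> Q"
  shows "card P \<le> card (direction ` (Q - {0})) + 1"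
proof -
  have Q1: "1 \<in> Q" using PQ P0 P1 by (metis add.right_neutral)
  show ?thesis using sym_card[OF fP sym P0] sym_count[OF fP fQ sym P0 P1 Pi PQ] dir_part[OF fQ Q1]
    by linarith
qed



lemma mp_add: "map_poly (of_rat::rat\<Rightarrow>real) (p + q) = map_poly of_rat p + map_poly of_rat q"
  by (intro poly_eqI) (simp add: coeff_map_poly of_rat_add)

lemma mp_sum: "finite A \<Longrightarrow> map_poly (of_rat::rat\<Rightarrow>real) (\<Sum>k\<in>A. f k) = (\<Sum>k\<in>A. map_poly of_rat (f k))"
  by (induction A rule: finite_induct) (simp_all add: mp_add)

lemma mp_eval_mult:
  "poly (map_poly (of_rat::rat\<Rightarrow>real) (p * q)) x = poly (map_poly of_rat p) x * poly (map_poly of_rat q) x"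
proof (induction p rule: pCons_induct)
  case 0 thus ?case by simp
next
  case (pCons a p)
  have "pCons a p * q = smult a q + pCons 0 (p * q)" by (simp add: mult_pCons_left)
  hence "poly (map_poly of_rat (pCons a p * q)) x
       = poly (map_poly (of_rat::rat\<Rightarrow>real) (smult a q)) x + poly (map_poly of_rat (pCons 0 (p * q))) x"
    by (simp add: mp_add)
  also have "\<dots> = of_rat a * poly (map_poly of_rat q) x + x * poly (map_poly of_rat (p * q)) x"
    by (simp add: map_poly_smult of_rat_mult map_poly_pCons)
  also have "\<dots> = poly (map_poly of_rat (pCons a p)) x * poly (map_poly of_rat q) x"
    using pCons.IH by (simp add: map_poly_pCons algebra_simps)
  finally show ?case .
qed

lemma root_low_deg:
  fixes p q :: "rat poly" and \<alpha> :: real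
  assumes irr: "irreducible p" and rp: "poly (map_poly of_rat p) \<alpha> = 0"
    and dq: "degree q < degree p" and rq: "poly (map_poly of_rat q) \<alpha> = 0"
  shows "q = 0"
proof (rule ccontr)
  assume q0: "q \<noteq> 0"
  have "\<not> p dvd q" using dvd_imp_degree_le[of p q] q0 dq by auto
  have pe: "prime_elem p" using field_poly_irreducible_imp_prime[OF irr] .
  have "is_unit (gcd p q)"
  proof (rule ccontr)
    assume "\<not> is_unit (gcd p q)"
    hence "p dvd gcd p q" using prime_elemD2[OF pe, of "gcd p q"] by simp
    hence "p dvd q" using dvd_trans gcd_dvd2 by blast
    thus False using \<open>\<not> p dvd q\<close> by simp
  qed
  hence g: "gcd p q = 1" by (simp add: is_unit_gcd_iff)
  define r where "r = fst (bezout_coefficients p q)"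
  define s where "s = snd (bezout_coefficients p q)"
  have "r * p + s * q = 1" using bezout_coefficients_fst_snd[of p q] g unfolding r_def s_def by simp
  hence "poly (map_poly (of_rat::rat\<Rightarrow>real) (r * p + s * q)) \<alpha> = 1" by simp
  moreover have "poly (map_poly (of_rat::rat\<Rightarrow>real) (r * p + s * q)) \<alpha> = 0"
    by (simp add: mp_add mp_eval_mult rp rq)
  ultimately show False by simp
qed

lemma coeff_inj:
  fixes p :: "rat poly" and \<alpha> :: real and a b :: "nat \<Rightarrow> int"
  assumes irr: "irreducible p" and rp: "poly (map_poly of_rat p) \<alpha> = 0"
    and d: "d = degree p" "d \<ge> 1"
    and eq: "(\<Sum>k<d. of_int (a k) * \<alpha> ^ k) = (\<Sum>k<d. of_int (b k) * \<alpha> ^ k)"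
    and k: "k < d"
  shows "a k = b k"
proof -
  define q :: "rat poly" where "q = (\<Sum>j<d. monom (of_int (a j - b j)) j)"
  have cq: "coeff q n = (if n < d then of_int (a n - b n) else 0)" for n
    unfolding q_def by (simp add: coeff_sum coeff_monom)
  have "degree q \<le> d - 1" by (rule degree_le) (use d in \<open>auto simp: cq\<close>)
  hence dq: "degree q < degree p" using d by simp
  have "poly (map_poly (of_rat::rat\<Rightarrow>real) q) \<alpha> = (\<Sum>j<d. of_int (a j - b j) * \<alpha> ^ j)"
    unfolding q_def by (simp add: mp_sum map_poly_monom poly_sum poly_monom of_rat_diff)
  also have "\<dots> = 0" using eq by (simp add: algebra_simps sum_subtractf)
  finally have "q = 0" using root_low_deg[OF irr rp dq] by simp
  hence "coeff q k = 0" by simp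
  thus ?thesis using k by (simp add: cq)
qed



lemma Kset_eq:
  "Kset \<alpha> d (real t) = (\<lambda>a. \<Sum>k<d. of_int (a k) * \<alpha> ^ k) ` (PiE {..<d} (\<lambda>_. {-int t..int t}))"
proof (rule set_eqI)
  fix x
  show "x \<in> Kset \<alpha> d (real t) \<longleftrightarrow> x \<in> (\<lambda>a. \<Sum>k<d. of_int (a k) * \<alpha> ^ k) ` (PiE {..<d} (\<lambda>_. {-int t..int t}))"
  proof
    assume "x \<in> Kset \<alpha> d (real t)"
    then obtain a where a: "x = (\<Sum>k<d. of_int (a k) * \<alpha> ^ k)" "\<forall>k<d. real_of_int \<bar>a k\<bar> \<le> real t"
      unfolding Kset_def by auto
    have "restrict a {..<d} \<in> PiE {..<d} (\<lambda>_. {-int t..int t})"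
    proof -
      have ab: "\<bar>a k\<bar> \<le> int t" if "k < d" for k
      proof -
        have "real_of_int \<bar>a k\<bar> \<le> real_of_int (int t)" using a(2) that by simp
        thus ?thesis by (simp only: of_int_le_iff)
      qed
      have "-int t \<le> a k \<and> a k \<le> int t" if "k < d" for k using ab[OF that] by (simp add: abs_le_iff)
      thus ?thesis by auto
    qed
    moreover have "x = (\<Sum>k<d. of_int (restrict a {..<d} k) * \<alpha> ^ k)" using a(1) by simp
    ultimately show "x \<in> (\<lambda>a. \<Sum>k<d. of_int (a k) * \<alpha> ^ k) ` (PiE {..<d} (\<lambda>_. {-int t..int t}))"
      by (intro image_eqI[of _ _ "restrict a {..<d}"])
  next
    assume "x \<in> (\<lambda>a. \<Sum>k<d. of_int (a k) * \<alpha> ^ k) ` (PiE {..<d} (\<lambda>_. {-int t..int t}))"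
    then obtain a where a: "a \<in> PiE {..<d} (\<lambda>_. {-int t..int t})" "x = (\<Sum>k<d. of_int (a k) * \<alpha> ^ k)"
      by auto
    have "real_of_int \<bar>a k\<bar> \<le> real t" if "k < d" for k
    proof -
      have "a k \<in> {-int t..int t}" using PiE_mem[OF a(1), of k] that by simp
      hence "\<bar>a k\<bar> \<le> int t" by auto
      hence "real_of_int \<bar>a k\<bar> \<le> real_of_int (int t)" by (simp only: of_int_le_iff)
      thus ?thesis by simp
    qed
    thus "x \<in> Kset \<alpha> d (real t)" unfolding Kset_def mem_Collect_eq using a(2)
      by (intro exI[of _ a] conjI) auto
  qed
qed

lemma card_Kset:
  fixes p :: "rat poly" and \<alpha> :: real
  assumes irr: "irreducible p" and rp: "poly (map_poly of_rat p) \<alpha> = 0"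
    and d: "d = degree p" "d \<ge> 1"
  shows "card (Kset \<alpha> d (real t)) = (2*t+1)^d"
proof -
  define B where "B = PiE {..<d} (\<lambda>_. {-int t..int t})"
  have inj: "inj_on (\<lambda>a. \<Sum>k<d. of_int (a k) * \<alpha> ^ k) B"
  proof (rule inj_onI)
    fix a b assume h: "a \<in> B" "b \<in> B" "(\<Sum>k<d. of_int (a k) * \<alpha> ^ k) = (\<Sum>k<d. of_int (b k) * \<alpha> ^ k)"
    have "\<forall>k\<in>{..<d}. a k = b k" using coeff_inj[OF irr rp d h(3)] by auto
    thus "a = b" using h(1,2) unfolding B_def by (intro PiE_ext) auto
  qed
  have "card B = (2*t+1)^d"
  proof -
    have "card {-int t..int t} = 2*t+1" by simp
    thus ?thesis unfolding B_def by (simp add: card_PiE)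
  qed
  thus ?thesis unfolding Kset_eq using card_image[OF inj] B_def by simp
qed

lemma finite_Kset: "finite (Kset \<alpha> d (real t))"
  unfolding Kset_eq by (intro finite_imageI finite_PiE) auto

lemma Kset_neg: assumes "x \<in> Kset \<alpha> d r" shows "-x \<in> Kset \<alpha> d r"
proof -
  obtain a where a: "x = (\<Sum>k<d. of_int (a k) * \<alpha> ^ k)" "\<forall>k<d. real_of_int \<bar>a k\<bar> \<le> r"
    using assms unfolding Kset_def by auto
  have "-x = (\<Sum>k<d. of_int ((\<lambda>k. - a k) k) * \<alpha> ^ k)" using a(1) by (simp add: sum_negf)
  moreover have "\<forall>k<d. real_of_int \<bar>(\<lambda>k. - a k) k\<bar> \<le> r" using a(2) by simp
  ultimately show ?thesis unfolding Kset_def mem_Collect_eq by (intro exI[of _ "\<lambda>k. - a k"]) simp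
qed

lemma Kset_add: assumes "x \<in> Kset \<alpha> d r" "y \<in> Kset \<alpha> d r" shows "x + y \<in> Kset \<alpha> d (2*r)"
proof -
  obtain a where a: "x = (\<Sum>k<d. of_int (a k) * \<alpha> ^ k)" "\<forall>k<d. real_of_int \<bar>a k\<bar> \<le> r"
    using assms(1) unfolding Kset_def by auto
  obtain b where b: "y = (\<Sum>k<d. of_int (b k) * \<alpha> ^ k)" "\<forall>k<d. real_of_int \<bar>b k\<bar> \<le> r"
    using assms(2) unfolding Kset_def by auto
  have "x + y = (\<Sum>k<d. of_int ((\<lambda>k. a k + b k) k) * \<alpha> ^ k)" using a(1) b(1)
    by (simp add: sum.distrib algebra_simps)
  moreover have "\<forall>k<d. real_of_int \<bar>(\<lambda>k. a k + b k) k\<bar> \<le> 2 * r"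
  proof (intro allI impI)
    fix k assume "k < d"
    hence "real_of_int \<bar>a k\<bar> \<le> r" "real_of_int \<bar>b k\<bar> \<le> r" using a(2) b(2) by auto
    moreover have "\<bar>a k + b k\<bar> \<le> \<bar>a k\<bar> + \<bar>b k\<bar>" by (rule abs_triangle_ineq)
    moreover have "real_of_int \<bar>a k + b k\<bar> \<le> real_of_int \<bar>a k\<bar> + real_of_int \<bar>b k\<bar>"
      using calculation(3) by (simp only: of_int_add[symmetric] of_int_le_iff)
    ultimately show "real_of_int \<bar>(\<lambda>k. a k + b k) k\<bar> \<le> 2 * r" by simp
  qed
  ultimately show ?thesis unfolding Kset_def mem_Collect_eq by (intro exI[of _ "\<lambda>k. a k + b k"]) simp
qed

lemma Kset_0: assumes "r \<ge> 0" shows "0 \<in> Kset \<alpha> d r"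
proof -
  have "0 = (\<Sum>k<d. of_int ((\<lambda>k. 0::int) k) * \<alpha> ^ k)" by simp
  moreover have "\<forall>k<d. real_of_int \<bar>(\<lambda>k. 0::int) k\<bar> \<le> r" using assms by simp
  ultimately show ?thesis unfolding Kset_def mem_Collect_eq by (intro exI[of _ "\<lambda>k. 0::int"]) simp
qed

lemma Kset_1: assumes "r \<ge> 1" "d \<ge> 1" shows "1 \<in> Kset \<alpha> d r"
proof -
  define a :: "nat \<Rightarrow> int" where "a k = (if k = 0 then 1 else 0)" for k
  have "(\<Sum>k<d. of_int (a k) * \<alpha> ^ k) = (\<Sum>k\<in>{0}. of_int (a k) * \<alpha> ^ k)"
    by (rule sum.mono_neutral_right) (use assms in \<open>auto simp: a_def\<close>)
  hence "1 = (\<Sum>k<d. of_int (a k) * \<alpha> ^ k)" by (simp add: a_def)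
  moreover have "\<forall>k<d. real_of_int \<bar>a k\<bar> \<le> r" using assms by (simp add: a_def)
  ultimately show ?thesis unfolding Kset_def mem_Collect_eq by (intro exI[of _ a]) simp
qed

lemma Gset_eq: "Gset \<alpha> d r = (\<lambda>(u1,u2). complex_of_real u1 + \<i> * complex_of_real u2) ` (Kset \<alpha> d r \<times> Kset \<alpha> d r)"
  unfolding Gset_def by auto

lemma inj_G: "inj_on (\<lambda>(u1,u2). complex_of_real u1 + \<i> * complex_of_real u2) A"
proof (rule inj_onI)
  fix x y :: "real \<times> real"
  assume "x \<in> A" "y \<in> A" "(\<lambda>(u1,u2). complex_of_real u1 + \<i> * complex_of_real u2) x = (\<lambda>(u1,u2). complex_of_real u1 + \<i> * complex_of_real u2) y"
  hence e: "complex_of_real (fst x) + \<i> * complex_of_real (snd x) = complex_of_real (fst y) + \<i> * complex_of_real (snd y)"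
    by (simp add: case_prod_beta)
  have "fst x = fst y" using arg_cong[OF e, of Re] by simp
  moreover have "snd x = snd y" using arg_cong[OF e, of Im] by simp
  ultimately show "x = y" by (simp add: prod_eq_iff)
qed


theorem mainTheorem4:
  fixes \<alpha> :: real and p :: "rat poly" and d :: nat
  assumes "algebraic_int \<alpha>"
    and "irreducible p" and "lead_coeff p = 1"
    and "poly (map_poly of_rat p) \<alpha> = 0"
    and "d = degree p" and "d \<ge> 1"
  shows "\<forall>t::nat. t > 0 \<longrightarrow>
           card (Kset \<alpha> d (real t)) = (2*t+1)^d \<and>
           card (Gset \<alpha> d (real t)) = (2*t+1)^(2*d) \<and>
           card (direction ` (Gset \<alpha> d (real (2*t)) - {0})) \<ge> (2*t)^(2*d)"
proof (intro allI impI)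
  fix t :: nat assume t: "t > 0"
  have cK: "card (Kset \<alpha> d (real t)) = (2*t+1)^d"
    using card_Kset[OF assms(2) assms(4) assms(5) assms(6)] .
  have cG: "card (Gset \<alpha> d (real t)) = (2*t+1)^(2*d)"
  proof -
    have "card (Gset \<alpha> d (real t)) = card (Kset \<alpha> d (real t) \<times> Kset \<alpha> d (real t))"
      unfolding Gset_eq by (rule card_image[OF inj_G])
    also have "\<dots> = (2*t+1)^d * (2*t+1)^d" using cK by (simp add: card_cartesian_product)
    also have "\<dots> = (2*t+1)^(2*d)" by (simp add: mult_2 power_add)
    finally show ?thesis .
  qed
  define P where "P = Gset \<alpha> d (real t)"
  define Q where "Q = Gset \<alpha> d (real (2*t))"
  have fP: "finite P" unfolding P_def Gset_eq using finite_Kset by auto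
  have fQ: "finite Q" unfolding Q_def Gset_eq using finite_Kset by blast
  have Gmem: "complex_of_real u1 + \<i> * complex_of_real u2 \<in> Gset \<alpha> d r"
    if "u1 \<in> Kset \<alpha> d r" "u2 \<in> Kset \<alpha> d r" for u1 u2 r
    unfolding Gset_def using that by blast
  have sym: "\<forall>z\<in>P. -z \<in> P"
  proof
    fix z assume "z \<in> P"
    then obtain u1 u2 where u: "z = complex_of_real u1 + \<i> * complex_of_real u2"
      "u1 \<in> Kset \<alpha> d (real t)" "u2 \<in> Kset \<alpha> d (real t)" unfolding P_def Gset_def by blast
    have "-z = complex_of_real (-u1) + \<i> * complex_of_real (-u2)" using u(1) by simp
    thus "-z \<in> P" unfolding P_def using Gmem[OF Kset_neg[OF u(2)] Kset_neg[OF u(3)]] by simp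
  qed
  have K0: "0 \<in> Kset \<alpha> d (real t)" by (rule Kset_0) simp
  have K1: "1 \<in> Kset \<alpha> d (real t)" by (rule Kset_1) (use t assms(6) in auto)
  have P0: "0 \<in> P" unfolding P_def using Gmem[OF K0 K0] by simp
  have P1: "1 \<in> P" unfolding P_def using Gmem[OF K1 K0] by simp
  have Pi: "\<i> \<in> P" unfolding P_def using Gmem[OF K0 K1] by simp
  have PQ: "\<forall>u\<in>P. \<forall>v\<in>P. u + v \<in> Q"
  proof (intro ballI)
    fix z w assume "z \<in> P" "w \<in> P"
    then obtain u1 u2 v1 v2 where u: "z = complex_of_real u1 + \<i> * complex_of_real u2"
      "u1 \<in> Kset \<alpha> d (real t)" "u2 \<in> Kset \<alpha> d (real t)"
      and v: "w = complex_of_real v1 + \<i> * complex_of_real v2"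
      "v1 \<in> Kset \<alpha> d (real t)" "v2 \<in> Kset \<alpha> d (real t)" unfolding P_def Gset_def by blast
    have "z + w = complex_of_real (u1 + v1) + \<i> * complex_of_real (u2 + v2)"
      using u(1) v(1) by (simp add: algebra_simps)
    moreover have "real (2*t) = 2 * real t" by simp
    ultimately show "z + w \<in> Q" unfolding Q_def
      using Gmem[OF Kset_add[OF u(2) v(2)] Kset_add[OF u(3) v(3)]] by simp
  qed
  have b: "card P \<le> card (direction ` (Q - {0})) + 1"
    by (rule dir_bound[OF fP fQ sym P0 P1 Pi PQ])
  have "(2*t)^(2*d) < (2*t+1)^(2*d)"
    by (rule power_strict_mono) (use assms(6) in auto)
  hence "(2*t)^(2*d) \<le> card (direction ` (Q - {0}))" using b cG unfolding P_def by linarith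
  thus "card (Kset \<alpha> d (real t)) = (2*t+1)^d \<and>
           card (Gset \<alpha> d (real t)) = (2*t+1)^(2*d) \<and>
           card (direction ` (Gset \<alpha> d (real (2*t)) - {0})) \<ge> (2*t)^(2*d)"
    using cK cG unfolding Q_def by simp
qed



end
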